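(* The function $F$ is Lebesgue integrable on $[0,1]$ and $$\int_0^1F(x)\,dx=z_1+\sum_{n=2}^{\infty}\Big(z_n\prod_{k=1}^{n-1}\sigma_k\Big),$$ where $z_n=\sum_{i=0}^{m_n}\beta_{i,n}q_{i,n}$ and $\sigma_n=\sum_{i=0}^{m_n}p_{i,n}q_{i,n}$.
   Context: Let $(m_n)_{n\ge1}$ be finite nonnegative integers and $\tilde Q=\|q_{i,n}\|$ ($i\in\{0,\dots,m_n\}$) with $q_{i,n}>0$, $\sum_{i}q_{i,n}=1$ for all $n$, and $\prod_n q_{i_n,n}=0$ for every digit sequence $(i_n)$. Put $a_{0,n}=0$, $a_{i,n}=\sum_{l<i}q_{l,n}$; $\Delta^{\tilde Q}_{j_1j_2\dots}=a_{j_1,1}+\sum_{n\ge2}a_{j_n,n}\prod_{l<n}q_{j_l,l}$. The nega-$\tilde Q$-representation $x=\Delta^{-\tilde Q}_{i_1i_2\dots}$ means $x=\Delta^{\tilde Q}_{i_1[m_2-i_2]i_3[m_4-i_4]\dots}$; every $x\in[0,1]$ has one. Let $P=\|p_{i,n}\|$ have the same shape with $p_{i,n}\in(-1,1)$, $\sum_ip_{i,n}=1$, $\prod_n|p_{i_n,n}|=0$ for every digit sequence, $0<\sum_{i<c}p_{i,n}<1$ for $c\in\{1,\dots,m_n\}$. Put $\beta_{0,n}=0$, $\beta_{c,n}=\sum_{i<c}p_{i,n}$; for odd $n$: $\tilde p_{i,n}=p_{i,n}$, $\tilde\beta_{i,n}=\beta_{i,n}$; for even $n$: $\tilde p_{i,n}=p_{m_n-i,n}$,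 $\tilde\beta_{i,n}=\beta_{m_n-i,n}$. $F(x)=\beta_{i_1,1}+\sum_{k\ge2}\tilde\beta_{i_k,k}\prod_{j<k}\tilde p_{i_j,j}$ for $x=\Delta^{-\tilde Q}_{i_1i_2\dots}$ (independent of the representation). *)

theory Defs
  imports "HOL-Analysis.Analysis"
begin

text \<open>Matrices are indexed as  q i n  (digit i, position n); positions start at n = 1,
  the value at position 0 is irrelevant.\<close>

definition digit_seq :: "(nat \<Rightarrow> nat) \<Rightarrow> (nat \<Rightarrow> nat) \<Rightarrow> bool" where
  "digit_seq m d \<longleftrightarrow> (\<forall>n\<ge>1. d n \<le> m n)"

definition Q_matrix :: "(nat \<Rightarrow> nat) \<Rightarrow> (nat \<Rightarrow> nat \<Rightarrow> real) \<Rightarrow> bool" where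
  "Q_matrix m q \<longleftrightarrow>
     (\<forall>n\<ge>1. \<forall>i\<le>m n. q i n > 0) \<and>
     (\<forall>n\<ge>1. (\<Sum>i\<le>m n. q i n) = 1) \<and>
     (\<forall>d. digit_seq m d \<longrightarrow> (\<lambda>N. \<Prod>n\<in>{1..N}. q (d n) n) \<longlonglongrightarrow> 0)"

definition P_matrix :: "(nat \<Rightarrow> nat) \<Rightarrow> (nat \<Rightarrow> nat \<Rightarrow> real) \<Rightarrow> bool" where
  "P_matrix m p \<longleftrightarrow>
     (\<forall>n\<ge>1. \<forall>i\<le>m n. -1 < p i n \<and> p i n < 1) \<and>
     (\<forall>n\<ge>1. (\<Sum>i\<le>m n. p i n) = 1) \<and>
     (\<forall>d. digit_seq m d \<longrightarrow> (\<lambda>N. \<Prod>n\<in>{1..N}. \<bar>p (d n) n\<bar>) \<longlonglongrightarrow> 0) \<and>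
     (\<forall>n\<ge>1. \<forall>c\<in>{1..m n}. 0 < (\<Sum>i<c. p i n) \<and> (\<Sum>i<c. p i n) < 1)"

text \<open>a_{i,n} (and likewise beta_{c,n}) = sum of the entries with index < i\<close>
definition acc :: "(nat \<Rightarrow> nat \<Rightarrow> real) \<Rightarrow> nat \<Rightarrow> nat \<Rightarrow> real" where
  "acc q i n = (\<Sum>l<i. q l n)"

definition DeltaQ :: "(nat \<Rightarrow> nat \<Rightarrow> real) \<Rightarrow> (nat \<Rightarrow> nat) \<Rightarrow> real" where
  "DeltaQ q j = (\<Sum>k. acc q (j (k+1)) (k+1) * (\<Prod>l\<in>{1..k}. q (j l) l))"

definition nega_digits :: "(nat \<Rightarrow> nat) \<Rightarrow> (nat \<Rightarrow> nat) \<Rightarrow> nat \<Rightarrow> nat" where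
  "nega_digits m i n = (if odd n then i n else m n - i n)"

definition NegaDeltaQ :: "(nat \<Rightarrow> nat) \<Rightarrow> (nat \<Rightarrow> nat \<Rightarrow> real) \<Rightarrow> (nat \<Rightarrow> nat) \<Rightarrow> real" where
  "NegaDeltaQ m q i = DeltaQ q (nega_digits m i)"

definition tilde :: "(nat \<Rightarrow> nat) \<Rightarrow> (nat \<Rightarrow> nat \<Rightarrow> real) \<Rightarrow> nat \<Rightarrow> nat \<Rightarrow> real" where
  "tilde m f i n = (if odd n then f i n else f (m n - i) n)"

definition Fdigits :: "(nat \<Rightarrow> nat) \<Rightarrow> (nat \<Rightarrow> nat \<Rightarrow> real) \<Rightarrow> (nat \<Rightarrow> nat) \<Rightarrow> real" where
  "Fdigits m p i = (\<Sum>k. tilde m (acc p) (i (k+1)) (k+1) * (\<Prod>j\<in>{1..k}. tilde m p (i j) j))"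

text \<open>F(x), using some nega-Q representation of x (the value is independent of the choice)\<close>
definition Ffun :: "(nat \<Rightarrow> nat) \<Rightarrow> (nat \<Rightarrow> nat \<Rightarrow> real) \<Rightarrow> (nat \<Rightarrow> nat \<Rightarrow> real) \<Rightarrow> real \<Rightarrow> real" where
  "Ffun m q p x = Fdigits m p (SOME i. digit_seq m i \<and> x = NegaDeltaQ m q i)"

end

theory Submission imports Defs begin

definition Bs :: "(nat \<Rightarrow> nat \<Rightarrow> real) \<Rightarrow> nat \<Rightarrow> (nat \<Rightarrow> nat) \<Rightarrow> real" where
 "Bs f N j = (\<Sum>k<N. acc f (j (k+1)) (k+1) * (\<Prod>l\<in>{1..k}. f (j l) l))"
definition Ps :: "(nat \<Rightarrow> nat \<Rightarrow> real) \<Rightarrow> nat \<Rightarrow> (nat \<Rightarrow> nat) \<Rightarrow> real" where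
 "Ps f N j = (\<Prod>l\<in>{1..N}. f (j l) l)"

lemma Bs_0[simp]: "Bs f 0 j = 0" by (simp add: Bs_def)
lemma Ps_0[simp]: "Ps f 0 j = 1" by (simp add: Ps_def)
lemma Bs_Suc: "Bs f (Suc N) j = Bs f N j + acc f (j (Suc N)) (Suc N) * Ps f N j"
  by (simp add: Bs_def Ps_def)
lemma Ps_Suc: "Ps f (Suc N) j = Ps f N j * f (j (Suc N)) (Suc N)"
  by (simp add: Ps_def prod.nat_ivl_Suc' mult.commute)
lemma acc_0[simp]: "acc f 0 n = 0" by (simp add: acc_def)
lemma acc_Suc: "acc f (Suc i) n = acc f i n + f i n" by (simp add: acc_def)

lemma Bs_cong: "(\<And>l. l \<in> {1..N} \<Longrightarrow> j l = j' l) \<Longrightarrow> Bs f N j = Bs f N j'"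
  by (induct N) (auto simp: Bs_Suc Ps_def)
lemma Ps_cong: "(\<And>l. l \<in> {1..N} \<Longrightarrow> j l = j' l) \<Longrightarrow> Ps f N j = Ps f N j'"
  unfolding Ps_def by (rule prod.cong) auto

lemma nest:
  assumes H: "\<And>n i. n \<ge> 1 \<Longrightarrow> i \<le> Suc (m n) \<Longrightarrow> 0 \<le> acc f i n \<and> acc f i n \<le> 1"
    and NM: "N \<le> M" and jb: "\<And>l. l \<in> {Suc N..M} \<Longrightarrow> j l \<le> m l"
  shows "\<forall>y. 0 \<le> y \<and> y \<le> 1 \<longrightarrow> (\<exists>w. 0 \<le> w \<and> w \<le> 1 \<and> Bs f M j + Ps f M j * y = Bs f N j + Ps f N j * w)"
  using NM jb
proof (induction M rule: dec_induct)
  case base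
  then show ?case by auto
next
  case (step M)
  show ?case
  proof (intro allI impI)
    fix y :: real assume y: "0 \<le> y \<and> y \<le> 1"
    define i where "i = j (Suc M)"
    have ib: "i \<le> m (Suc M)" using step.prems step.hyps unfolding i_def by auto
    have a0: "0 \<le> acc f i (Suc M) \<and> acc f i (Suc M) \<le> 1" using H[of "Suc M" i] ib by auto
    have a1: "0 \<le> acc f (Suc i) (Suc M) \<and> acc f (Suc i) (Suc M) \<le> 1" using H[of "Suc M" "Suc i"] ib by auto
    define y' where "y' = acc f i (Suc M) + f i (Suc M) * y"
    have y'eq: "y' = (1 - y) * acc f i (Suc M) + y * acc f (Suc i) (Suc M)"
      unfolding y'_def acc_Suc by (simp add: algebra_simps)
    have "0 \<le> y'" unfolding y'eq using a0 a1 y by (intro add_nonneg_nonneg mult_nonneg_nonneg) auto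
    moreover have "y' \<le> 1"
    proof -
      have "(1 - y) * acc f i (Suc M) \<le> (1 - y) * 1" using a0 y by (intro mult_left_mono) auto
      moreover have "y * acc f (Suc i) (Suc M) \<le> y * 1" using a1 y by (intro mult_left_mono) auto
      ultimately show ?thesis unfolding y'eq by simp
    qed
    moreover have IH: "\<forall>y. 0 \<le> y \<and> y \<le> 1 \<longrightarrow> (\<exists>w. 0 \<le> w \<and> w \<le> 1 \<and> Bs f M j + Ps f M j * y = Bs f N j + Ps f N j * w)"
      using step by auto
    ultimately obtain w where w: "0 \<le> w \<and> w \<le> 1 \<and> Bs f M j + Ps f M j * y' = Bs f N j + Ps f N j * w" by blast
    have "Bs f (Suc M) j + Ps f (Suc M) j * y = Bs f M j + Ps f M j * y'"
      unfolding Bs_Suc Ps_Suc y'_def i_def by (simp add: algebra_simps)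
    with w show "\<exists>w. 0 \<le> w \<and> w \<le> 1 \<and> Bs f (Suc M) j + Ps f (Suc M) j * y = Bs f N j + Ps f N j * w" by auto
  qed
qed

lemma Bs_range:
  assumes H: "\<And>n i. n \<ge> 1 \<Longrightarrow> i \<le> Suc (m n) \<Longrightarrow> 0 \<le> acc f i n \<and> acc f i n \<le> 1"
    and jb: "\<And>l. l \<in> {1..M} \<Longrightarrow> j l \<le> m l"
  shows "0 \<le> Bs f M j \<and> Bs f M j \<le> 1"
  proof -
  obtain w where "0 \<le> w" "w \<le> 1" "Bs f M j + Ps f M j * 0 = Bs f 0 j + Ps f 0 j * w"
  proof -
    have jb': "\<And>l. l \<in> {Suc 0..M} \<Longrightarrow> j l \<le> m l" using jb by auto
    have nn: "\<forall>y. 0 \<le> y \<and> y \<le> 1 \<longrightarrow> (\<exists>w. 0 \<le> w \<and> w \<le> 1 \<and> Bs f M j + Ps f M j * y = Bs f 0 j + Ps f 0 j * w)"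
      by (rule nest[OF H le0 jb'])
    from nn[rule_format, of 0] show ?thesis using that by auto
  qed
  then show ?thesis by simp
qed

lemma Bs_diff:
  assumes H: "\<And>n i. n \<ge> 1 \<Longrightarrow> i \<le> Suc (m n) \<Longrightarrow> 0 \<le> acc f i n \<and> acc f i n \<le> 1"
    and NM: "N \<le> M" and jb: "\<And>l. l \<in> {1..M} \<Longrightarrow> j l \<le> m l"
  shows "\<bar>Bs f M j - Bs f N j\<bar> \<le> \<bar>Ps f N j\<bar>"
proof -
  obtain w where w: "0 \<le> w" "w \<le> 1" "Bs f M j = Bs f N j + Ps f N j * w"
  proof -
    have jb': "\<And>l. l \<in> {Suc N..M} \<Longrightarrow> j l \<le> m l" using jb by auto
    have nn: "\<forall>y. 0 \<le> y \<and> y \<le> 1 \<longrightarrow> (\<exists>w. 0 \<le> w \<and> w \<le> 1 \<and> Bs f M j + Ps f M j * y = Bs f N j + Ps f N j * w)"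
      by (rule nest[OF H NM jb'])
    from nn[rule_format, of 0] show ?thesis using that by auto
  qed
  have "\<bar>Ps f N j\<bar> * w \<le> \<bar>Ps f N j\<bar>" using w by (intro mult_left_le) auto
  then have "\<bar>Ps f N j * w\<bar> \<le> \<bar>Ps f N j\<bar> * 1" using w by (simp add: abs_mult)
  then show ?thesis using w by simp
qed

lemma Bs_conv:
  assumes H: "\<And>n i. n \<ge> 1 \<Longrightarrow> i \<le> Suc (m n) \<Longrightarrow> 0 \<le> acc f i n \<and> acc f i n \<le> 1"
    and jb: "\<And>l. l \<ge> 1 \<Longrightarrow> j l \<le> m l"
    and P0: "(\<lambda>N. Ps f N j) \<longlonglongrightarrow> 0"
  shows "convergent (\<lambda>N. Bs f N j)"
proof -
  have "Cauchy (\<lambda>N. Bs f N j)"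
  proof (rule CauchyI)
    fix e :: real assume e: "0 < e"
    have "\<exists>M. \<forall>n\<ge>M. \<bar>Ps f n j\<bar> < e/2" using P0 e unfolding LIMSEQ_iff by (metis half_gt_zero real_norm_def diff_zero)
    then obtain M where M: "\<And>n. n \<ge> M \<Longrightarrow> \<bar>Ps f n j\<bar> < e/2" by blast
    show "\<exists>M. \<forall>m\<ge>M. \<forall>n\<ge>M. norm (Bs f m j - Bs f n j) < e"
    proof (intro exI allI impI)
      fix a b assume a: "a \<ge> M" and b: "b \<ge> M"
      have "\<bar>Bs f a j - Bs f M j\<bar> \<le> \<bar>Ps f M j\<bar>" using Bs_diff[OF H a] jb by auto
      moreover have "\<bar>Bs f b j - Bs f M j\<bar> \<le> \<bar>Ps f M j\<bar>" using Bs_diff[OF H b] jb by auto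
      moreover have "\<bar>Ps f M j\<bar> < e/2" using M by auto
      ultimately show "norm (Bs f a j - Bs f b j) < e" by simp
    qed
  qed
  then show ?thesis by (simp add: Cauchy_convergent_iff)
qed

lemma Bs_sums:
  assumes "convergent (\<lambda>N. Bs f N j)"
  shows "(\<lambda>N. Bs f N j) \<longlonglongrightarrow> (\<Sum>k. acc f (j (k+1)) (k+1) * (\<Prod>l\<in>{1..k}. f (j l) l))"
proof -
  have "summable (\<lambda>k. acc f (j (k+1)) (k+1) * (\<Prod>l\<in>{1..k}. f (j l) l))"
    using assms unfolding summable_iff_convergent Bs_def .
  then show ?thesis unfolding Bs_def by (rule summable_LIMSEQ)
qed

lemma Q_facts:
  assumes "Q_matrix m q"
  shows Q_pos: "\<And>n i. n \<ge> 1 \<Longrightarrow> i \<le> m n \<Longrightarrow> q i n > 0"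
    and Q_accm: "\<And>n. n \<ge> 1 \<Longrightarrow> acc q (Suc (m n)) n = 1"
    and Q_mono: "\<And>n a b. n \<ge> 1 \<Longrightarrow> a \<le> b \<Longrightarrow> b \<le> Suc (m n) \<Longrightarrow> acc q a n \<le> acc q b n"
    and Q_H: "\<And>n i. n \<ge> 1 \<Longrightarrow> i \<le> Suc (m n) \<Longrightarrow> 0 \<le> acc q i n \<and> acc q i n \<le> 1"
    and Q_P0: "\<And>j. digit_seq m j \<Longrightarrow> (\<lambda>N. Ps q N j) \<longlonglongrightarrow> 0"
proof -
  show pos: "\<And>n i. n \<ge> 1 \<Longrightarrow> i \<le> m n \<Longrightarrow> q i n > 0" using assms unfolding Q_matrix_def by auto
  show accm: "\<And>n. n \<ge> 1 \<Longrightarrow> acc q (Suc (m n)) n = 1" using assms unfolding Q_matrix_def acc_def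
    by (simp add: lessThan_Suc_atMost)
  show mono: "\<And>n a b. n \<ge> 1 \<Longrightarrow> a \<le> b \<Longrightarrow> b \<le> Suc (m n) \<Longrightarrow> acc q a n \<le> acc q b n"
  proof -
    fix n a b assume h: "(n::nat) \<ge> 1" "(a::nat) \<le> b" "b \<le> Suc (m n)"
    show "acc q a n \<le> acc q b n" unfolding acc_def
      by (rule sum_mono2) (use h pos in \<open>auto intro: less_imp_le\<close>)
  qed
  show "\<And>n i. n \<ge> 1 \<Longrightarrow> i \<le> Suc (m n) \<Longrightarrow> 0 \<le> acc q i n \<and> acc q i n \<le> 1"
    using mono[of _ 0] mono[of _ _ "Suc (m _)"] accm by fastforce
  show "\<And>j. digit_seq m j \<Longrightarrow> (\<lambda>N. Ps q N j) \<longlonglongrightarrow> 0"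
    using assms unfolding Q_matrix_def Ps_def by blast
qed

lemma P_facts:
  assumes "P_matrix m p"
  shows P_H: "\<And>n i. n \<ge> 1 \<Longrightarrow> i \<le> Suc (m n) \<Longrightarrow> 0 \<le> acc p i n \<and> acc p i n \<le> 1"
    and P_P0: "\<And>j. digit_seq m j \<Longrightarrow> (\<lambda>N. Ps p N j) \<longlonglongrightarrow> 0"
proof -
  fix n i assume n: "(n::nat) \<ge> 1" and i: "i \<le> Suc (m n)"
  show "0 \<le> acc p i n \<and> acc p i n \<le> 1"
  proof (cases "i = 0")
    case True then show ?thesis by simp
  next
    case False
    show ?thesis
    proof (cases "i = Suc (m n)")
      case True
      then show ?thesis using assms n unfolding P_matrix_def acc_def by (simp add: lessThan_Suc_atMost)
    next
      case False
      then have "i \<in> {1..m n}" using \<open>i \<noteq> 0\<close> i by auto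
      then show ?thesis using assms n unfolding P_matrix_def acc_def by (meson less_imp_le)
    qed
  qed
next
  fix j assume "digit_seq m j"
  then have "(\<lambda>N. \<Prod>n\<in>{1..N}. \<bar>p (j n) n\<bar>) \<longlonglongrightarrow> 0" using assms unfolding P_matrix_def by blast
  then have "(\<lambda>N. \<bar>Ps p N j\<bar>) \<longlonglongrightarrow> 0" unfolding Ps_def by (simp add: abs_prod)
  then show "(\<lambda>N. Ps p N j) \<longlonglongrightarrow> 0" by (simp add: tendsto_rabs_zero_iff)
qed

lemma Ps_q_nonneg:
  assumes Q: "Q_matrix m q" and jb: "\<And>l. l \<in> {1..N} \<Longrightarrow> j l \<le> m l"
  shows "0 \<le> Ps q N j"
proof -
  have "\<forall>l\<in>{1..N}. 0 \<le> q (j l) l"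
  proof
    fix l assume l: "l \<in> {1..N}"
    then have "l \<ge> 1" by simp
    from Q_pos[OF Q this jb[OF l]] show "0 \<le> q (j l) l" by simp
  qed
  then show ?thesis unfolding Ps_def by (intro prod_nonneg) blast
qed

lemma Qnest:
  assumes Q: "Q_matrix m q" and NM: "N \<le> M" and jb: "\<And>l. l \<in> {1..M} \<Longrightarrow> j l \<le> m l"
  shows "Bs q N j \<le> Bs q M j \<and> Bs q M j + Ps q M j \<le> Bs q N j + Ps q N j"
proof -
  have jbN: "\<And>l. l \<in> {1..N} \<Longrightarrow> j l \<le> m l" using jb NM by simp
  have pn: "0 \<le> Ps q N j" by (rule Ps_q_nonneg[OF Q jbN])
  have jb': "\<And>l. l \<in> {Suc N..M} \<Longrightarrow> j l \<le> m l" using jb by simp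
  have nn: "\<forall>y. 0 \<le> y \<and> y \<le> 1 \<longrightarrow> (\<exists>w. 0 \<le> w \<and> w \<le> 1 \<and> Bs q M j + Ps q M j * y = Bs q N j + Ps q N j * w)"
    by (rule nest[OF Q_H[OF Q] NM jb'])
  have "\<exists>w. 0 \<le> w \<and> w \<le> 1 \<and> Bs q M j + Ps q M j * 0 = Bs q N j + Ps q N j * w"
    using nn[rule_format, of 0] by simp
  then obtain w where w: "0 \<le> w" "w \<le> 1" "Bs q M j = Bs q N j + Ps q N j * w" by auto
  have "\<exists>w. 0 \<le> w \<and> w \<le> 1 \<and> Bs q M j + Ps q M j * 1 = Bs q N j + Ps q N j * w"
    using nn[rule_format, of 1] by simp
  then obtain v where v: "0 \<le> v" "v \<le> 1" "Bs q M j + Ps q M j = Bs q N j + Ps q N j * v" by auto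
  have "0 \<le> Ps q N j * w" using pn w(1) by (rule mult_nonneg_nonneg)
  moreover have "Ps q N j * v \<le> Ps q N j" using pn v(2) by (simp add: mult_left_le)
  ultimately show ?thesis using w(3) v(3) by linarith
qed

lemma Qorder:
  assumes Q: "Q_matrix m q"
  shows "(\<forall>l\<in>{1..N}. j l \<le> m l) \<Longrightarrow> (\<forall>l\<in>{1..N}. j' l \<le> m l) \<Longrightarrow>
    (\<exists>l\<in>{1..N}. j l \<noteq> j' l) \<Longrightarrow>
    Bs q N j + Ps q N j \<le> Bs q N j' \<or> Bs q N j' + Ps q N j' \<le> Bs q N j"
proof (induction N)
  case 0
  then show ?case by simp
next
  case (Suc N)
  have jb: "\<forall>l\<in>{1..N}. j l \<le> m l" "\<forall>l\<in>{1..N}. j' l \<le> m l" using Suc.prems(1,2) by simp_all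
  have jS: "j (Suc N) \<le> m (Suc N)" "j' (Suc N) \<le> m (Suc N)" using Suc.prems(1,2) by simp_all
  have jbS: "\<And>l. l \<in> {1..Suc N} \<Longrightarrow> j l \<le> m l" "\<And>l. l \<in> {1..Suc N} \<Longrightarrow> j' l \<le> m l"
    using Suc.prems(1,2) by blast+
  show ?case
  proof (cases "\<exists>l\<in>{1..N}. j l \<noteq> j' l")
    case True
    have IH: "Bs q N j + Ps q N j \<le> Bs q N j' \<or> Bs q N j' + Ps q N j' \<le> Bs q N j"
      by (rule Suc.IH[OF jb True])
    have a: "Bs q N j \<le> Bs q (Suc N) j \<and> Bs q (Suc N) j + Ps q (Suc N) j \<le> Bs q N j + Ps q N j"
      by (rule Qnest[OF Q _ jbS(1)]) simp
    have b: "Bs q N j' \<le> Bs q (Suc N) j' \<and> Bs q (Suc N) j' + Ps q (Suc N) j' \<le> Bs q N j' + Ps q N j'"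
      by (rule Qnest[OF Q _ jbS(2)]) simp
    show ?thesis using IH a b by linarith
  next
    case False
    then have eq: "\<And>l. l \<in> {1..N} \<Longrightarrow> j l = j' l" by blast
    obtain l where l: "l \<in> {1..Suc N}" "j l \<noteq> j' l" using Suc.prems(3) by blast
    have "l = Suc N" using l eq by (cases "l = Suc N") auto
    then have ne: "j (Suc N) \<noteq> j' (Suc N)" using l by simp
    have BB: "Bs q N j = Bs q N j'" by (rule Bs_cong[OF eq])
    have PP: "Ps q N j = Ps q N j'" by (rule Ps_cong[OF eq])
    have pn: "0 \<le> Ps q N j" using Ps_q_nonneg[OF Q, of N j] jb(1) by blast
    have key: "Bs q (Suc N) a + Ps q (Suc N) a \<le> Bs q (Suc N) b"
      if ab: "a (Suc N) < b (Suc N)" "b (Suc N) \<le> m (Suc N)" and eqs: "Bs q N a = Bs q N j" "Bs q N b = Bs q N j"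
         "Ps q N a = Ps q N j" "Ps q N b = Ps q N j" for a b
    proof -
      have "acc q (Suc (a (Suc N))) (Suc N) \<le> acc q (b (Suc N)) (Suc N)"
        by (rule Q_mono[OF Q]) (use ab in simp_all)
      then have le: "Ps q N j * acc q (Suc (a (Suc N))) (Suc N) \<le> Ps q N j * acc q (b (Suc N)) (Suc N)"
        using pn by (rule mult_left_mono)
      have e1: "Bs q (Suc N) a + Ps q (Suc N) a = Bs q N j + Ps q N j * acc q (Suc (a (Suc N))) (Suc N)"
        unfolding Bs_Suc Ps_Suc acc_Suc eqs by (simp add: distrib_left mult.commute)
      have e2: "Bs q (Suc N) b = Bs q N j + Ps q N j * acc q (b (Suc N)) (Suc N)"
        unfolding Bs_Suc eqs by (simp add: mult.commute)
      show ?thesis unfolding e1 e2 using le by simp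
    qed
    show ?thesis
    proof (cases "j (Suc N) < j' (Suc N)")
      case True
      have "Bs q (Suc N) j + Ps q (Suc N) j \<le> Bs q (Suc N) j'"
        by (rule key[where a=j and b=j', OF True jS(2)]) (simp_all add: BB PP)
      then show ?thesis by simp
    next
      case False
      then have lt: "j' (Suc N) < j (Suc N)" using ne by simp
      have "Bs q (Suc N) j' + Ps q (Suc N) j' \<le> Bs q (Suc N) j"
        by (rule key[where a=j' and b=j, OF lt jS(1)]) (simp_all add: BB PP)
      then show ?thesis by simp
    qed
  qed
qed

lemma DeltaQ_facts:
  assumes Q: "Q_matrix m q" and j: "digit_seq m j"
  shows DQ_lim: "(\<lambda>N. Bs q N j) \<longlonglongrightarrow> DeltaQ q j"
    and DQ_bounds: "Bs q N j \<le> DeltaQ q j \<and> DeltaQ q j \<le> Bs q N j + Ps q N j"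
proof -
  have jb: "\<And>l. l \<ge> 1 \<Longrightarrow> j l \<le> m l" using j unfolding digit_seq_def by auto
  show lim: "(\<lambda>N. Bs q N j) \<longlonglongrightarrow> DeltaQ q j"
    unfolding DeltaQ_def by (rule Bs_sums[OF Bs_conv[OF Q_H[OF Q] jb Q_P0[OF Q j]]])
  have h1: "Bs q N j \<le> Bs q M j" and h2: "Bs q M j \<le> Bs q N j + Ps q N j" if NM: "N \<le> M" for M
  proof -
    have jbM: "\<And>l. l \<in> {1..M} \<Longrightarrow> j l \<le> m l" using jb by simp
    have a: "Bs q N j \<le> Bs q M j \<and> Bs q M j + Ps q M j \<le> Bs q N j + Ps q N j"
      by (rule Qnest[OF Q NM jbM])
    have b: "0 \<le> Ps q M j" by (rule Ps_q_nonneg[OF Q jbM])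
    show "Bs q N j \<le> Bs q M j" using a by (rule conjunct1)
    show "Bs q M j \<le> Bs q N j + Ps q N j" using a b by linarith
  qed
  have "Bs q N j \<le> DeltaQ q j"
    by (rule LIMSEQ_le_const[OF lim]) (use h1 in blast)
  moreover have "DeltaQ q j \<le> Bs q N j + Ps q N j"
    by (rule LIMSEQ_le_const2[OF lim]) (use h2 in blast)
  ultimately show "Bs q N j \<le> DeltaQ q j \<and> DeltaQ q j \<le> Bs q N j + Ps q N j" by (rule conjI)
qed

definition gdig :: "(nat \<Rightarrow> nat) \<Rightarrow> (nat \<Rightarrow> nat \<Rightarrow> real) \<Rightarrow> real \<Rightarrow> real \<Rightarrow> real \<Rightarrow> nat \<Rightarrow> nat" where
  "gdig m q x a pr n = (GREATEST i. i \<le> m n \<and> a + pr * acc q i n \<le> x)"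

primrec gst :: "(nat \<Rightarrow> nat) \<Rightarrow> (nat \<Rightarrow> nat \<Rightarrow> real) \<Rightarrow> real \<Rightarrow> nat \<Rightarrow> real \<times> real" where
  "gst m q x 0 = (0, 1)"
| "gst m q x (Suc n) = (let i = gdig m q x (fst (gst m q x n)) (snd (gst m q x n)) (Suc n) in
     (fst (gst m q x n) + snd (gst m q x n) * acc q i (Suc n), snd (gst m q x n) * q i (Suc n)))"

definition gj :: "(nat \<Rightarrow> nat) \<Rightarrow> (nat \<Rightarrow> nat \<Rightarrow> real) \<Rightarrow> real \<Rightarrow> nat \<Rightarrow> nat" where
  "gj m q x n = (case n of 0 \<Rightarrow> 0 | Suc k \<Rightarrow> gdig m q x (fst (gst m q x k)) (snd (gst m q x k)) (Suc k))"

lemma gst_eq: "gst m q x n = (Bs q n (gj m q x), Ps q n (gj m q x))"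
  by (induction n) (simp_all add: Bs_Suc Ps_Suc Let_def gj_def)

lemma gj_Suc: "gj m q x (Suc k) = gdig m q x (Bs q k (gj m q x)) (Ps q k (gj m q x)) (Suc k)"
  unfolding gj_def[of m q x "Suc k"] by (simp add: gst_eq)

lemma gdig_props:
  assumes "a \<le> x"
  shows "gdig m q x a pr n \<le> m n" "a + pr * acc q (gdig m q x a pr n) n \<le> x"
    "gdig m q x a pr n < m n \<Longrightarrow> x < a + pr * acc q (Suc (gdig m q x a pr n)) n"
proof -
  let ?P = "\<lambda>i. i \<le> m n \<and> a + pr * acc q i n \<le> x"
  have P0: "?P 0" using assms by simp
  have G: "?P (Greatest ?P)" by (rule GreatestI_nat[where P="?P", OF P0]) auto
  then show "gdig m q x a pr n \<le> m n" "a + pr * acc q (gdig m q x a pr n) n \<le> x"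
    unfolding gdig_def by auto
  assume lt: "gdig m q x a pr n < m n"
  show "x < a + pr * acc q (Suc (gdig m q x a pr n)) n"
  proof (rule ccontr)
    assume "\<not> ?thesis"
    then have "?P (Suc (gdig m q x a pr n))" using lt by auto
    then have "Suc (gdig m q x a pr n) \<le> Greatest ?P" by (rule Greatest_le_nat[where P="?P"]) auto
    then show False unfolding gdig_def by simp
  qed
qed

lemma greedy:
  assumes Q: "Q_matrix m q" and x: "0 \<le> x" "x \<le> 1"
  shows "digit_seq m (gj m q x) \<and> DeltaQ q (gj m q x) = x"
proof -
  let ?g = "gj m q x"
  have inv: "Bs q n ?g \<le> x \<and> x \<le> Bs q n ?g + Ps q n ?g" for n
  proof (induction n)
    case 0
    then show ?case using x by simp
  next
    case (Suc n)
    let ?a = "Bs q n ?g" and ?pr = "Ps q n ?g"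
    have gS: "?g (Suc n) = gdig m q x ?a ?pr (Suc n)" by (rule gj_Suc)
    have ax: "?a \<le> x" using Suc by simp
    note gp = gdig_props[where m=m and q=q and pr="?pr" and n="Suc n", OF ax]
    have lo: "Bs q (Suc n) ?g \<le> x" unfolding Bs_Suc using gp(2) gS by (simp add: mult.commute)
    have hi: "x \<le> Bs q (Suc n) ?g + Ps q (Suc n) ?g"
    proof (cases "gdig m q x ?a ?pr (Suc n) < m (Suc n)")
      case True
      then show ?thesis using gp(3) gS unfolding Bs_Suc Ps_Suc acc_Suc by (simp add: algebra_simps)
    next
      case False
      then have "gdig m q x ?a ?pr (Suc n) = m (Suc n)" using gp(1) by auto
      then have "acc q (?g (Suc n)) (Suc n) + q (?g (Suc n)) (Suc n) = 1"
        using Q_accm[OF Q, of "Suc n"] gS by (simp add: acc_Suc)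
      then have "Bs q (Suc n) ?g + Ps q (Suc n) ?g = ?a + ?pr"
        unfolding Bs_Suc Ps_Suc by (metis distrib_left mult.commute mult.right_neutral add.assoc)
      then show ?thesis using Suc by simp
    qed
    show ?case using lo hi by simp
  qed
  have ds: "digit_seq m ?g"
    unfolding digit_seq_def
  proof (intro allI impI)
    fix n :: nat assume "1 \<le> n"
    then obtain k where k: "n = Suc k" by (cases n) auto
    have "?g n = gdig m q x (Bs q k ?g) (Ps q k ?g) n" unfolding k by (rule gj_Suc)
    then show "?g n \<le> m n" using gdig_props(1)[where a="Bs q k ?g" and x=x and m=m and q=q and pr="Ps q k ?g" and n=n] inv[of k] by simp
  qed
  have l1: "(\<lambda>N. Bs q N ?g) \<longlonglongrightarrow> DeltaQ q ?g" by (rule DQ_lim[OF Q ds])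
  have l2: "(\<lambda>N. Bs q N ?g) \<longlonglongrightarrow> x"
  proof (rule tendsto_sandwich[where f="\<lambda>N. x - Ps q N ?g" and h="\<lambda>N. x"])
    show "\<forall>\<^sub>F N in sequentially. x - Ps q N ?g \<le> Bs q N ?g" using inv by (simp add: algebra_simps)
    show "\<forall>\<^sub>F N in sequentially. Bs q N ?g \<le> x" using inv by simp
    show "(\<lambda>N. x - Ps q N ?g) \<longlonglongrightarrow> x" using tendsto_diff[OF tendsto_const Q_P0[OF Q ds], of x] by simp
  qed simp
  show ?thesis using ds LIMSEQ_unique[OF l1 l2] by simp
qed

lemma DeltaQ_cong: "(\<And>n. n \<ge> 1 \<Longrightarrow> j n = j' n) \<Longrightarrow> DeltaQ q j = DeltaQ q j'"
  unfolding DeltaQ_def by (intro arg_cong[where f=suminf] ext arg_cong2[where f="(*)"] prod.cong) auto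

definition J :: "(nat \<Rightarrow> nat) \<Rightarrow> (nat \<Rightarrow> nat \<Rightarrow> real) \<Rightarrow> real \<Rightarrow> nat \<Rightarrow> nat" where
  "J m q x = nega_digits m (SOME i. digit_seq m i \<and> x = NegaDeltaQ m q i)"

lemma J_props:
  assumes Q: "Q_matrix m q" and x: "0 \<le> x" "x \<le> 1"
  shows "digit_seq m (J m q x) \<and> DeltaQ q (J m q x) = x"
proof -
  let ?j = "gj m q x"
  have g: "digit_seq m ?j" "DeltaQ q ?j = x" using greedy[OF Q x] by auto
  have "digit_seq m (nega_digits m ?j) \<and> x = NegaDeltaQ m q (nega_digits m ?j)"
  proof
    show "digit_seq m (nega_digits m ?j)" using g(1) unfolding digit_seq_def nega_digits_def by auto
    have "DeltaQ q (nega_digits m (nega_digits m ?j)) = DeltaQ q ?j"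
      by (rule DeltaQ_cong) (use g(1) in \<open>auto simp: nega_digits_def digit_seq_def\<close>)
    then show "x = NegaDeltaQ m q (nega_digits m ?j)" using g(2) unfolding NegaDeltaQ_def by simp
  qed
  then have S: "digit_seq m (SOME i. digit_seq m i \<and> x = NegaDeltaQ m q i) \<and>
     x = NegaDeltaQ m q (SOME i. digit_seq m i \<and> x = NegaDeltaQ m q i)"
    by (rule someI[where P="\<lambda>i. digit_seq m i \<and> x = NegaDeltaQ m q i"])
  then show ?thesis unfolding J_def NegaDeltaQ_def using S unfolding digit_seq_def nega_digits_def by auto
qed

lemma Ffun_eq: "Ffun m q p x = (\<Sum>k. acc p (J m q x (k+1)) (k+1) * (\<Prod>l\<in>{1..k}. p (J m q x l) l))"
  unfolding Ffun_def Fdigits_def J_def tilde_def nega_digits_def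
  by (intro arg_cong[where f=suminf] ext arg_cong2[where f="(*)"] prod.cong) (auto split: if_splits)

definition LL :: "(nat \<Rightarrow> nat) \<Rightarrow> nat \<Rightarrow> (nat \<Rightarrow> nat) set" where
  "LL m N = PiE {1..N} (\<lambda>l. {..m l})"

definition EE :: "(nat \<Rightarrow> nat) \<Rightarrow> (nat \<Rightarrow> nat \<Rightarrow> real) \<Rightarrow> nat \<Rightarrow> (nat \<Rightarrow> nat) \<Rightarrow> real set" where
  "EE m q N c = {x \<in> {0..1}. \<forall>l\<in>{1..N}. J m q x l = c l}"

lemma finite_null: "finite (F::real set) \<Longrightarrow> F \<in> null_sets lebesgue"
  by (induct rule: finite_induct) auto

lemma EE_meas:
  assumes Q: "Q_matrix m q" and c: "c \<in> LL m N"
  shows "EE m q N c \<in> sets lebesgue \<and> measure lebesgue (EE m q N c) = Ps q N c"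
proof -
  have cb: "\<And>l. l \<in> {1..N} \<Longrightarrow> c l \<le> m l" using c unfolding LL_def by auto
  define a where "a = Bs q N c"
  define b where "b = Bs q N c + Ps q N c"
  have ab: "0 \<le> a" "b \<le> 1" "a \<le> b"
    using Qnest[OF Q, of 0 N c] cb Ps_q_nonneg[OF Q, of N c] unfolding a_def b_def by auto
  have sub1: "{a<..<b} \<subseteq> EE m q N c"
  proof
    fix x assume x: "x \<in> {a<..<b}"
    then have x01: "0 \<le> x" "x \<le> 1" using ab by auto
    note Jp = J_props[OF Q x01]
    have jb: "\<And>l. l \<in> {1..N} \<Longrightarrow> J m q x l \<le> m l" using Jp unfolding digit_seq_def by auto
    have bd: "Bs q N (J m q x) \<le> x \<and> x \<le> Bs q N (J m q x) + Ps q N (J m q x)"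
      using DQ_bounds[OF Q, of "J m q x" N] Jp by auto
    have "\<forall>l\<in>{1..N}. J m q x l = c l"
    proof (rule ccontr)
      assume "\<not> ?thesis"
      then have "\<exists>l\<in>{1..N}. J m q x l \<noteq> c l" by auto
      from Qorder[OF Q _ _ this] jb cb bd x show False unfolding a_def b_def by auto
    qed
    then show "x \<in> EE m q N c" unfolding EE_def using x01 by auto
  qed
  have sub2: "EE m q N c \<subseteq> {a..b}"
  proof
    fix x assume x: "x \<in> EE m q N c"
    then have x01: "0 \<le> x" "x \<le> 1" and eq: "\<And>l. l \<in> {1..N} \<Longrightarrow> J m q x l = c l"
      unfolding EE_def by auto
    note Jp = J_props[OF Q x01]
    have "Bs q N (J m q x) \<le> x \<and> x \<le> Bs q N (J m q x) + Ps q N (J m q x)"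
      using DQ_bounds[OF Q, of "J m q x" N] Jp by auto
    moreover have "Bs q N (J m q x) = Bs q N c" "Ps q N (J m q x) = Ps q N c"
      using Bs_cong[OF eq] Ps_cong[OF eq] by auto
    ultimately show "x \<in> {a..b}" unfolding a_def b_def by auto
  qed
  have split: "EE m q N c = {a<..<b} \<union> (EE m q N c - {a<..<b})" using sub1 by auto
  have nul: "EE m q N c - {a<..<b} \<in> null_sets lebesgue"
  proof -
    have "EE m q N c - {a<..<b} \<subseteq> {a, b}" using sub2 by auto
    then have "finite (EE m q N c - {a<..<b})" by (rule finite_subset) auto
    then show ?thesis by (rule finite_null)
  qed
  have "{a<..<b} \<union> (EE m q N c - {a<..<b}) \<in> sets lebesgue"
    using nul by (intro sets.Un) (auto dest: null_setsD2)
  then have "EE m q N c \<in> sets lebesgue" by (simp only: split[symmetric])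
  moreover have "measure lebesgue (EE m q N c) = measure lebesgue {a<..<b}"
  proof -
    have "measure lebesgue ({a<..<b} \<union> (EE m q N c - {a<..<b})) = measure lebesgue {a<..<b}"
      by (rule measure_Un_null_set[OF _ nul]) simp
    then show ?thesis by (simp only: split[symmetric])
  qed
  ultimately show ?thesis using ab unfolding a_def b_def by simp
qed

lemma finite_LL: "finite (LL m N)" unfolding LL_def by (intro finite_PiE) auto

lemma ind_sum:
  fixes g :: "(nat \<Rightarrow> nat) \<Rightarrow> real"
  assumes Q: "Q_matrix m q"
    and dep: "\<And>c c'. (\<And>l. l \<in> {1..N} \<Longrightarrow> c l = c' l) \<Longrightarrow> g c = g c'"
  shows "indicator {0..1} x * g (J m q x) = (\<Sum>c\<in>LL m N. g c * indicator (EE m q N c) x)"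
proof (cases "x \<in> {0..1}")
  case False
  then have "\<And>c. x \<notin> EE m q N c" unfolding EE_def by auto
  then have "\<And>c. indicator (EE m q N c) x = (0::real)" by simp
  then have "(\<Sum>c\<in>LL m N. g c * indicator (EE m q N c) x) = 0" by simp
  moreover have "indicator {0..1} x = (0::real)" using False by simp
  ultimately show ?thesis by simp
next
  case True
  then have x01: "0 \<le> x" "x \<le> 1" by auto
  note Jp = J_props[OF Q x01]
  define c0 where "c0 = restrict (J m q x) {1..N}"
  have c0L: "c0 \<in> LL m N" using Jp unfolding LL_def c0_def digit_seq_def by auto
  have xE: "x \<in> EE m q N c0" using True unfolding EE_def c0_def by auto
  have other: "x \<notin> EE m q N c" if "c \<in> LL m N" "c \<noteq> c0" for c
  proof
    assume "x \<in> EE m q N c"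
    then have "\<forall>l\<in>{1..N}. J m q x l = c l" unfolding EE_def by auto
    then have "c = c0" using that(1) unfolding c0_def LL_def
      by (auto simp: fun_eq_iff PiE_def extensional_def)
    with that show False by simp
  qed
  have "(\<Sum>c\<in>LL m N. g c * indicator (EE m q N c) x) = g c0 * indicator (EE m q N c0) x
     + (\<Sum>c\<in>LL m N - {c0}. g c * indicator (EE m q N c) x)"
    by (rule sum.remove[OF finite_LL c0L])
  also have "(\<Sum>c\<in>LL m N - {c0}. g c * indicator (EE m q N c) x) = 0"
    using other by (intro sum.neutral) auto
  also have "g c0 = g (J m q x)" by (rule dep) (simp add: c0_def)
  finally show ?thesis using xE True by simp
qed

lemma int_lemma:
  fixes g :: "(nat \<Rightarrow> nat) \<Rightarrow> real"
  assumes Q: "Q_matrix m q"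
    and dep: "\<And>c c'. (\<And>l. l \<in> {1..N} \<Longrightarrow> c l = c' l) \<Longrightarrow> g c = g c'"
  shows "integrable lebesgue (\<lambda>x. indicator {0..1} x * g (J m q x)) \<and>
    integral\<^sup>L lebesgue (\<lambda>x. indicator {0..1} x * g (J m q x)) = (\<Sum>c\<in>LL m N. g c * Ps q N c)"
proof -
  have eq: "(\<lambda>x. indicator {0..1} x * g (J m q x)) = (\<lambda>x. \<Sum>c\<in>LL m N. g c * indicator (EE m q N c) x)"
  proof
    fix x show "indicator {0..1} x * g (J m q x) = (\<Sum>c\<in>LL m N. g c * indicator (EE m q N c) x)"
      by (rule ind_sum[where N=N and g=g, OF Q dep])
  qed
  have ii: "integrable lebesgue (\<lambda>x. indicator (EE m q N c) x :: real)" if "c \<in> LL m N" for c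
  proof -
    have "EE m q N c \<subseteq> {0..1}" unfolding EE_def by auto
    then have "emeasure lebesgue (EE m q N c) \<le> emeasure lebesgue {0..1::real}"
      by (intro emeasure_mono) auto
    then have "emeasure lebesgue (EE m q N c) < \<infinity>" by (simp add: order_le_less_trans)
    then show ?thesis using EE_meas[OF Q that] by (simp add: integrable_indicator_iff)
  qed
  have "integrable lebesgue (\<lambda>x. \<Sum>c\<in>LL m N. g c * indicator (EE m q N c) x)"
    using ii by (intro Bochner_Integration.integrable_sum integrable_mult_right) auto
  moreover have "integral\<^sup>L lebesgue (\<lambda>x. \<Sum>c\<in>LL m N. g c * indicator (EE m q N c) x) = (\<Sum>c\<in>LL m N. g c * Ps q N c)"
    using ii EE_meas[OF Q] by (subst Bochner_Integration.integral_sum) (auto intro: sum.cong)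
  ultimately show ?thesis unfolding eq by simp
qed

definition FF :: "(nat \<Rightarrow> nat \<Rightarrow> real) \<Rightarrow> (nat \<Rightarrow> nat \<Rightarrow> real) \<Rightarrow> nat \<Rightarrow> nat \<Rightarrow> nat \<Rightarrow> real" where
  "FF p q k l i = (if l \<le> k then p i l * q i l else if l = Suc k then acc p i l * q i l else q i l)"

lemma prodF:
  assumes "Suc k \<le> N"
  shows "(\<Prod>l\<in>{1..N}. FF p q k l (c l)) = acc p (c (Suc k)) (Suc k) * Ps p k c * Ps q N c"
  using assms
proof (induction N rule: dec_induct)
  case base
  have "(\<Prod>l\<in>{1..k}. FF p q k l (c l)) = (\<Prod>l\<in>{1..k}. p (c l) l * q (c l) l)"
    by (rule prod.cong) (auto simp: FF_def)
  also have "\<dots> = Ps p k c * Ps q k c" unfolding Ps_def by (rule prod.distrib)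
  finally show ?case by (simp add: prod.nat_ivl_Suc' Ps_Suc FF_def)
next
  case (step N)
  then show ?case by (simp add: prod.nat_ivl_Suc' Ps_Suc FF_def)
qed

lemma sumF:
  assumes Q: "Q_matrix m q" and "Suc k \<le> N"
  shows "(\<Prod>l\<in>{1..N}. \<Sum>i\<le>m l. FF p q k l i) =
    (\<Sum>i\<le>m (Suc k). acc p i (Suc k) * q i (Suc k)) * (\<Prod>l\<in>{1..k}. \<Sum>i\<le>m l. p i l * q i l)"
  using assms(2)
proof (induction N rule: dec_induct)
  case base
  have "(\<Prod>l\<in>{1..k}. \<Sum>i\<le>m l. FF p q k l i) = (\<Prod>l\<in>{1..k}. \<Sum>i\<le>m l. p i l * q i l)"
    by (intro prod.cong sum.cong) (auto simp: FF_def)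
  then show ?case by (simp add: prod.nat_ivl_Suc' FF_def mult.commute)
next
  case (step N)
  have "(\<Sum>i\<le>m (Suc N). q i (Suc N)) = 1" using Q unfolding Q_matrix_def by auto
  then show ?case using step by (simp add: prod.nat_ivl_Suc' FF_def)
qed

lemma sum_calc:
  assumes Q: "Q_matrix m q"
  shows "(\<Sum>c\<in>LL m N. Bs p N c * Ps q N c) =
    (\<Sum>k<N. (\<Sum>i\<le>m (Suc k). acc p i (Suc k) * q i (Suc k)) * (\<Prod>l\<in>{1..k}. \<Sum>i\<le>m l. p i l * q i l))"
proof -
  have "(\<Sum>c\<in>LL m N. Bs p N c * Ps q N c) = (\<Sum>c\<in>LL m N. \<Sum>k<N. \<Prod>l\<in>{1..N}. FF p q k l (c l))"
  proof (rule sum.cong[OF refl])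
    fix c
    have "Bs p N c * Ps q N c = (\<Sum>k<N. acc p (c (Suc k)) (Suc k) * Ps p k c * Ps q N c)"
      unfolding Bs_def Ps_def by (simp add: sum_distrib_right)
    also have "\<dots> = (\<Sum>k<N. \<Prod>l\<in>{1..N}. FF p q k l (c l))"
      by (rule sum.cong[OF refl], rule prodF[symmetric]) simp
    finally show "Bs p N c * Ps q N c = (\<Sum>k<N. \<Prod>l\<in>{1..N}. FF p q k l (c l))" .
  qed
  also have "\<dots> = (\<Sum>k<N. \<Sum>c\<in>LL m N. \<Prod>l\<in>{1..N}. FF p q k l (c l))" by (rule sum.swap)
  also have "\<dots> = (\<Sum>k<N. \<Prod>l\<in>{1..N}. \<Sum>i\<le>m l. FF p q k l i)"
    unfolding LL_def by (rule sum.cong[OF refl]) (rule prod_sum_PiE[symmetric], auto)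
  also have "\<dots> = (\<Sum>k<N. (\<Sum>i\<le>m (Suc k). acc p i (Suc k) * q i (Suc k)) * (\<Prod>l\<in>{1..k}. \<Sum>i\<le>m l. p i l * q i l))"
    by (rule sum.cong[OF refl], rule sumF[OF Q]) simp
  finally show ?thesis .
qed

theorem mainTheorem7:
  fixes m :: "nat \<Rightarrow> nat" and q p :: "nat \<Rightarrow> nat \<Rightarrow> real"
  assumes "Q_matrix m q" and "P_matrix m p"
  defines "z \<equiv> (\<lambda>n. \<Sum>i\<le>m n. acc p i n * q i n)"
      and "\<sigma> \<equiv> (\<lambda>n. \<Sum>i\<le>m n. p i n * q i n)"
  shows "set_integrable lebesgue {0..1::real} (Ffun m q p) \<and>
         (\<lambda>n. z (n+2) * (\<Prod>k\<in>{1..n+1}. \<sigma> k)) sums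
           ((LINT x:{0..1::real}|lebesgue. Ffun m q p x) - z 1)"
proof -
  note Q = assms(1) and P = assms(2)
  define s where "s N x = indicator {0..1::real} x * Bs p N (J m q x)" for N x
  define f where "f x = indicator {0..1::real} x * Ffun m q p x" for x
  have dep: "\<And>N c c'. (\<And>l. l \<in> {1..N} \<Longrightarrow> c l = c' l) \<Longrightarrow> Bs p N c = Bs p N c'"
    by (rule Bs_cong) auto
  have si: "integrable lebesgue (s N) \<and> integral\<^sup>L lebesgue (s N) =
      (\<Sum>k<N. z (Suc k) * (\<Prod>l\<in>{1..k}. \<sigma> l))" for N
    using int_lemma[where N=N and g="Bs p N", OF Q dep] sum_calc[where N=N and p=p, OF Q]
    unfolding s_def z_def \<sigma>_def by simp
  have lim: "(\<lambda>N. s N x) \<longlonglongrightarrow> f x" for x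
  proof (cases "x \<in> {0..1}")
    case True
    then have x01: "0 \<le> (x::real)" "x \<le> 1" by auto
    have ds: "digit_seq m (J m q x)" using J_props[OF Q x01] by auto
    have jb: "\<And>l. l \<ge> 1 \<Longrightarrow> J m q x l \<le> m l" using ds unfolding digit_seq_def by auto
    have "(\<lambda>N. Bs p N (J m q x)) \<longlonglongrightarrow> Ffun m q p x"
      unfolding Ffun_eq by (rule Bs_sums[OF Bs_conv[OF P_H[OF P] jb P_P0[OF P ds]]])
    then show ?thesis using True unfolding s_def f_def by simp
  next
    case False
    then show ?thesis unfolding s_def f_def by simp
  qed
  have fm: "f \<in> borel_measurable lebesgue"
    by (rule borel_measurable_LIMSEQ_real[OF lim]) (use si in \<open>auto intro: borel_measurable_integrable\<close>)
  have wi: "integrable lebesgue (indicator {0..1::real} :: real \<Rightarrow> real)"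
    by (simp add: integrable_indicator_iff)
  have bound: "norm (s N x) \<le> indicator {0..1::real} x" for N x
  proof (cases "x \<in> {0..1}")
    case True
    then have x01: "0 \<le> (x::real)" "x \<le> 1" by auto
    have ds: "digit_seq m (J m q x)" using J_props[OF Q x01] by auto
    have "0 \<le> Bs p N (J m q x) \<and> Bs p N (J m q x) \<le> 1"
      by (rule Bs_range[OF P_H[OF P]]) (use ds in \<open>auto simp: digit_seq_def\<close>)
    then show ?thesis using True unfolding s_def by simp
  next
    case False
    then show ?thesis unfolding s_def by simp
  qed
  have fi: "integrable lebesgue f"
    by (rule integrable_dominated_convergence[where s=s, OF fm _ wi]) (use si lim bound in \<open>auto intro: borel_measurable_integrable AE_I2\<close>)
  have flim: "(\<lambda>N. integral\<^sup>L lebesgue (s N)) \<longlonglongrightarrow> integral\<^sup>L lebesgue f"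
    by (rule integral_dominated_convergence[where s=s, OF fm _ wi]) (use si lim bound in \<open>auto intro: borel_measurable_integrable AE_I2\<close>)
  define I where "I = integral\<^sup>L lebesgue f"
  have Ieq: "(LINT x:{0..1::real}|lebesgue. Ffun m q p x) = I"
    unfolding I_def f_def set_lebesgue_integral_def by simp
  have "(\<lambda>k. z (Suc k) * (\<Prod>l\<in>{1..k}. \<sigma> l)) sums I"
    unfolding sums_def using flim si unfolding I_def by simp
  then have "(\<lambda>n. z (Suc (Suc n)) * (\<Prod>l\<in>{1..Suc n}. \<sigma> l)) sums (I - z 1)"
    by (subst sums_Suc_iff) simp
  moreover have "set_integrable lebesgue {0..1::real} (Ffun m q p)"
    using fi unfolding set_integrable_def f_def by simp
  ultimately show ?thesis unfolding Ieq by simp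
qed

end
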